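(* Assume all thermal noise is zero ($\mathbf N_T=\mathbf 0$, $\mathbf N_D=\mathbf 0$), and let $\hat{\mathbf H}=\mathbf Y_T\mathbf S_T^\dagger$ be the least-squares channel estimate. If the jammer is not eclipsed (in the sense of eclipsing with channel estimation defined in the context), then the optimization problem $$\min_{\tilde{\mathbf S}_D\in\mathcal S^{U\times D},\ \tilde{\mathbf P}\in\mathscr G_{B-I}(\mathbb C^B)}\ \big\|\tilde{\mathbf P}(\mathbf Y_D-\hat{\mathbf H}\tilde{\mathbf S}_D)\big\|_F^2$$ has the unique minimizer $(\hat{\mathbf P},\hat{\mathbf S}_D)=(\mathbf I_B-\mathbf J\mathbf J^\dagger,\ \mathbf S_D)$.
   Context: Let $B,U,I,T,D$ be positive integers with $B\ge U+I$ and $T\ge U$. Let $\mathcal S=\{(\pm1\pm i)/\sqrt2\}\subset\mathbb C$ (QPSK). Let $\mathbf H\in\mathbb C^{B\times U}$, $\mathbf J\in\mathbb C^{B\times I}$ with $[\mathbf H,\mathbf J]$ of full column rank $U+I$. Let $\mathbf S_T\in\mathbb C^{U\times T}$ be a pilot matrix of full row rank $U$ (so $\mathbf S_T\mathbf S_T^\dagger=\mathbf I_U$), $\mathbf S_D\in\mathcal S^{U\times D}$, $\mathbf W_T\in\mathbb C^{I\times T}$, $\mathbf W_D\in\mathbb C^{I\times D}$, noise $\mathbf N_T,\mathbf N_D$, and $\mathbf Y_T=\mathbf H\mathbf S_T+\mathbf J\mathbf W_T+\mathbf N_T$, $\mathbf Y_D=\mathbf H\mathbf S_D+\mathbf J\mathbf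 W_D+\mathbf N_D$. $\mathbf A^\dagger$ is the Moore–Penrose pseudoinverse. $\mathscr G_{B-I}(\mathbb C^B)$ denotes the set of $B\times B$ orthogonal projections onto $(B-I)$-dimensional subspaces of $\mathbb C^B$. Eclipsing with channel estimation: the jammer is eclipsed if there exists $\tilde{\mathbf S}_D\in\mathcal S^{U\times D}\setminus\{\mathbf S_D\}$ such that $\begin{bmatrix}\mathbf S_D-\tilde{\mathbf S}_D\\ \mathbf W_D-\mathbf W_T\mathbf S_T^\dagger\tilde{\mathbf S}_D\end{bmatrix}\in\mathbb C^{(U+I)\times D}$ has rank at most $I$. *)

theory Defs
  imports Complex_Main "Jordan_Normal_Form.DL_Rank" "Jordan_Normal_Form.Schur_Decomposition"
begin

definition qpsk :: "complex set" where
  "qpsk = {(complex_of_real a + \<i> * complex_of_real b) / complex_of_real (sqrt 2) | a b.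
            a \<in> {-1, 1} \<and> b \<in> {-1, 1}}"

definition qpsk_mats :: "nat \<Rightarrow> nat \<Rightarrow> complex mat set" where
  "qpsk_mats m n = {M \<in> carrier_mat m n. \<forall>i<m. \<forall>j<n. M $$ (i, j) \<in> qpsk}"

definition mrank :: "complex mat \<Rightarrow> nat" where
  "mrank A = vec_space.rank (dim_row A) A"

definition pinv :: "complex mat \<Rightarrow> complex mat" where
  "pinv A = (THE X. X \<in> carrier_mat (dim_col A) (dim_row A) \<and>
      A * X * A = A \<and> X * A * X = X \<and>
      mat_adjoint (A * X) = A * X \<and> mat_adjoint (X * A) = X * A)"

definition frob_sq :: "complex mat \<Rightarrow> real" where
  "frob_sq A = (\<Sum>i<dim_row A. \<Sum>j<dim_col A. (cmod (A $$ (i, j)))\<^sup>2)"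

definition hstack :: "complex mat \<Rightarrow> complex mat \<Rightarrow> complex mat" where
  "hstack A C = mat (dim_row A) (dim_col A + dim_col C)
     (\<lambda>(i, j). if j < dim_col A then A $$ (i, j) else C $$ (i, j - dim_col A))"

definition vstack :: "complex mat \<Rightarrow> complex mat \<Rightarrow> complex mat" where
  "vstack A C = mat (dim_row A + dim_row C) (dim_col A)
     (\<lambda>(i, j). if i < dim_row A then A $$ (i, j) else C $$ (i - dim_row A, j))"

text \<open>Grassmannian G_k(C^n) realised as the set of n x n orthogonal projections
  (Hermitian idempotents) of rank k, i.e. onto k-dimensional subspaces.\<close>
definition proj_grass :: "nat \<Rightarrow> nat \<Rightarrow> complex mat set" where
  "proj_grass k n = {P \<in> carrier_mat n n. P * P = P \<and> mat_adjoint P = P \<and> mrank P = k}"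

definition eclipsed_ce ::
  "nat \<Rightarrow> nat \<Rightarrow> nat \<Rightarrow> complex mat \<Rightarrow> complex mat \<Rightarrow> complex mat \<Rightarrow> complex mat \<Rightarrow> bool" where
  "eclipsed_ce U I D S_T S_D W_T W_D =
     (\<exists>S'. S' \<in> qpsk_mats U D \<and> S' \<noteq> S_D \<and>
        mrank (vstack (S_D - S') (W_D - W_T * pinv S_T * S')) \<le> I)"

end

theory Submission
  imports Defs
begin

declare col_mult[simp del]


lemma adj_dim[simp]: "dim_row (mat_adjoint (A::complex mat)) = dim_col A" "dim_col (mat_adjoint A) = dim_row A"
  unfolding mat_adjoint_def by auto

lemma adj_index[simp]: "i < dim_col A \<Longrightarrow> j < dim_row A \<Longrightarrow> mat_adjoint (A::complex mat) $$ (i,j) = cnj (A $$ (j,i))"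
  unfolding mat_adjoint_def by (simp add: mat_of_rows_def)

lemma adj_carrier: "A \<in> carrier_mat n m \<Longrightarrow> mat_adjoint (A::complex mat) \<in> carrier_mat m n"
  unfolding carrier_mat_def using adj_dim by simp

lemma adj_adj[simp]: "mat_adjoint (mat_adjoint (A::complex mat)) = A"
  by (rule eq_matI) simp_all

lemma adj_mult: assumes "(A::complex mat) \<in> carrier_mat n m" "B \<in> carrier_mat m k"
  shows "mat_adjoint (A * B) = mat_adjoint B * mat_adjoint A"
proof (rule eq_matI)
  fix i j assume "i < dim_row (mat_adjoint B * mat_adjoint A)" "j < dim_col (mat_adjoint B * mat_adjoint A)"
  then show "mat_adjoint (A * B) $$ (i, j) = (mat_adjoint B * mat_adjoint A) $$ (i, j)"
    using assms by (simp add: scalar_prod_def mult.commute)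
qed (use assms in simp_all)

lemma adj_one[simp]: "mat_adjoint (1\<^sub>m n :: complex mat) = 1\<^sub>m n"
  by (rule eq_matI) simp_all

lemma adj_minus: assumes "(A::complex mat) \<in> carrier_mat n m" "B \<in> carrier_mat n m"
  shows "mat_adjoint (A - B) = mat_adjoint A - mat_adjoint B"
  by (rule eq_matI) (use assms in simp_all)

lemma adj_add: assumes "(A::complex mat) \<in> carrier_mat n m" "B \<in> carrier_mat n m"
  shows "mat_adjoint (A + B) = mat_adjoint A + mat_adjoint B"
  by (rule eq_matI) (use assms in simp_all)


definition pen :: "complex mat \<Rightarrow> complex mat \<Rightarrow> bool" where
  "pen A X \<longleftrightarrow> X \<in> carrier_mat (dim_col A) (dim_row A) \<and>
      A * X * A = A \<and> X * A * X = X \<and>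
      mat_adjoint (A * X) = A * X \<and> mat_adjoint (X * A) = X * A"

lemma pen_unique: assumes "pen A X" "pen A Y" shows "X = Y"
proof -
  define n m where "n = dim_row A" and "m = dim_col A"
  have A: "A \<in> carrier_mat n m" unfolding n_def m_def by auto
  have X: "X \<in> carrier_mat m n" and Y: "Y \<in> carrier_mat m n" using assms unfolding pen_def n_def m_def by auto
  note c = A X Y adj_carrier[OF A] adj_carrier[OF X] adj_carrier[OF Y]
  have p: "A * X * A = A" "X * A * X = X" "mat_adjoint (A * X) = A * X" "mat_adjoint (X * A) = X * A"
    "A * Y * A = A" "Y * A * Y = Y" "mat_adjoint (A * Y) = A * Y" "mat_adjoint (Y * A) = Y * A"
    using assms unfolding pen_def by auto
  have AX: "A * X = mat_adjoint X * mat_adjoint A" using p(3) adj_mult[OF A X] by simp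
  have XA: "X * A = mat_adjoint A * mat_adjoint X" using p(4) adj_mult[OF X A] by simp
  have YA: "Y * A = mat_adjoint A * mat_adjoint Y" using p(8) adj_mult[OF Y A] by simp
  have Ah1: "mat_adjoint A = mat_adjoint A * (A * Y)"
  proof -
    have "mat_adjoint A = mat_adjoint ((A * Y) * A)" using p(5) by simp
    also have "\<dots> = mat_adjoint A * mat_adjoint (A * Y)" using adj_mult[of "A*Y" n n A m] c by auto
    finally show ?thesis unfolding p(7) .
  qed
  have Ah2: "mat_adjoint A = (X * A) * mat_adjoint A"
  proof -
    have "mat_adjoint A = mat_adjoint (A * (X * A))" using p(1) assoc_mult_mat[OF A X A] by simp
    also have "\<dots> = mat_adjoint (X * A) * mat_adjoint A" using adj_mult[of A n m "X*A" m] c by auto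
    finally show ?thesis unfolding p(4) .
  qed
  have "X = X * (A * X)" using p(2) assoc_mult_mat[OF X A X] by simp
  also have "\<dots> = X * mat_adjoint X * mat_adjoint A" using AX assoc_mult_mat[OF X adj_carrier[OF X] adj_carrier[OF A]] by simp
  also have "\<dots> = X * mat_adjoint X * (mat_adjoint A * (A * Y))" using Ah1 by simp
  also have "\<dots> = X * (mat_adjoint X * mat_adjoint A) * (A * Y)"
    using assoc_mult_mat[OF X adj_carrier[OF X] adj_carrier[OF A]] assoc_mult_mat[OF mult_carrier_mat[OF X adj_carrier[OF X]] adj_carrier[OF A] mult_carrier_mat[OF A Y]] by simp
  also have "\<dots> = X * A * X * A * Y" using AX assoc_mult_mat[OF X A X] assoc_mult_mat[OF mult_carrier_mat[OF X A] X mult_carrier_mat[OF A Y]] assoc_mult_mat[OF mult_carrier_mat[OF mult_carrier_mat[OF X A] X] A Y] by simp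
  also have "\<dots> = X * A * Y" using p(2) by simp
  finally have 1: "X = X * A * Y" .
  have "Y = (Y * A) * Y" using p(6) by simp
  also have "\<dots> = mat_adjoint A * mat_adjoint Y * Y" using YA by simp
  also have "\<dots> = (X * A) * mat_adjoint A * mat_adjoint Y * Y" using Ah2 by simp
  also have "\<dots> = (X * A) * (mat_adjoint A * mat_adjoint Y) * Y" using assoc_mult_mat[OF mult_carrier_mat[OF X A] adj_carrier[OF A] adj_carrier[OF Y]] by simp
  also have "\<dots> = X * A * (Y * A * Y)" using YA assoc_mult_mat[OF mult_carrier_mat[OF X A] mult_carrier_mat[OF Y A] Y] by simp
  also have "\<dots> = X * A * Y" using p(6) by simp
  finally have 2: "Y = X * A * Y" .
  show ?thesis using 1 2 by metis
qed

lemma pinv_eq: assumes "pen A X" shows "pinv A = X"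
proof -
  have "pinv A = (THE X. pen A X)" unfolding pinv_def pen_def by simp
  also have "\<dots> = X" using assms pen_unique by blast
  finally show ?thesis .
qed


definition injm :: "complex mat \<Rightarrow> bool" where
  "injm A \<longleftrightarrow> (\<forall>v \<in> carrier_vec (dim_col A). A *\<^sub>v v = 0\<^sub>v (dim_row A) \<longrightarrow> v = 0\<^sub>v (dim_col A))"

lemma injmD: "injm A \<Longrightarrow> v \<in> carrier_vec (dim_col A) \<Longrightarrow> A *\<^sub>v v = 0\<^sub>v (dim_row A) \<Longrightarrow> v = 0\<^sub>v (dim_col A)"
  unfolding injm_def by blast

lemma mult_unit_col: assumes "i < dim_col (A::complex mat)" shows "A *\<^sub>v unit_vec (dim_col A) i = col A i"
proof (rule eq_vecI)
  fix r assume "r < dim_vec (col A i)"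
  then have r: "r < dim_row A" by simp
  have "row A r \<bullet> unit_vec (dim_col A) i = row A r $ i" by (rule scalar_prod_right_unit[OF assms])
  then show "(A *\<^sub>v unit_vec (dim_col A) i) $ r = col A i $ r" using r assms by simp
qed simp

lemma injm_distinct: assumes "injm A" shows "distinct (cols A)"
proof (rule ccontr)
  assume "\<not> distinct (cols A)"
  then obtain i j where ij: "i < dim_col A" "j < dim_col A" "i \<noteq> j" "cols A ! i = cols A ! j"
    by (auto simp: distinct_conv_nth)
  define v :: "complex vec" where "v = unit_vec (dim_col A) i - unit_vec (dim_col A) j"
  have vc: "v \<in> carrier_vec (dim_col A)" unfolding v_def by simp
  have "v $ i = 1" unfolding v_def using ij by simp
  hence vn: "v \<noteq> 0\<^sub>v (dim_col A)" using ij by auto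
  have ei: "A *\<^sub>v unit_vec (dim_col A) i = col A i" by (rule mult_unit_col) (use ij in simp)
  have ej: "A *\<^sub>v unit_vec (dim_col A) j = col A j" by (rule mult_unit_col) (use ij in simp)
  have cij: "col A i = col A j" using ij by simp
  have "A *\<^sub>v v = A *\<^sub>v unit_vec (dim_col A) i - A *\<^sub>v unit_vec (dim_col A) j" unfolding v_def
    by (rule mult_minus_distrib_mat_vec[of A "dim_row A" "dim_col A"]) simp_all
  also have "\<dots> = 0\<^sub>v (dim_row A)" unfolding ei ej cij by simp
  finally show False using injmD[OF assms vc] vn by blast
qed

lemma injm_lin_indpt:
  assumes "injm A"
  shows "module.lin_indpt class_ring (module_vec TYPE(complex) (dim_row A)) (set (cols A))"
proof -
  interpret vec_space "TYPE(complex)" "dim_row A" .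
  have A: "A \<in> carrier_mat (dim_row A) (dim_col A)" by auto
  have d: "distinct (cols A)" using injm_distinct[OF assms] .
  show ?thesis
  proof (rule ccontr)
    assume "\<not> lin_indpt (set (cols A))"
    then obtain v where "v \<in> carrier_vec (dim_col A)" "v \<noteq> 0\<^sub>v (dim_col A)" "A *\<^sub>v v = 0\<^sub>v (dim_row A)"
      using lin_depE[OF A _ d] by blast
    then show False using injmD[OF assms] by blast
  qed
qed

lemma injm_rank: assumes "injm A" shows "mrank A = dim_col A"
proof -
  interpret vec_space "TYPE(complex)" "dim_row A" .
  have A: "A \<in> carrier_mat (dim_row A) (dim_col A)" by auto
  show ?thesis unfolding mrank_def
    using lin_indpt_full_rank[OF A injm_distinct[OF assms] injm_lin_indpt[OF assms]] .
qed

lemma injm_le_rows: assumes "injm A" shows "dim_col A \<le> dim_row A"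
proof -
  interpret vec_space "TYPE(complex)" "dim_row A" .
  have A: "A \<in> carrier_mat (dim_row A) (dim_col A)" by auto
  have "set (cols A) \<subseteq> carrier_vec (dim_row A)" using A cols_dim by blast
  then have "card (set (cols A)) \<le> dim" using li_le_dim(2)[OF fin_dim _ injm_lin_indpt[OF assms]] by simp
  moreover have "card (set (cols A)) = dim_col A" using distinct_card[OF injm_distinct[OF assms]] by simp
  ultimately show ?thesis using dim_is_n by simp
qed

lemma rank_mult_le: assumes A: "A \<in> carrier_mat n m" and C: "C \<in> carrier_mat m k"
  shows "mrank (A * C) \<le> mrank A"
proof -
  interpret vec_space "TYPE(complex)" n .
  have sub: "set (cols (A * C)) \<subseteq> span (set (cols A))"
  proof
    fix x assume "x \<in> set (cols (A * C))"
    then obtain j where j: "j < k" "x = col (A * C) j" using A C by (auto simp: in_set_conv_nth)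
    then have "x = A *\<^sub>v col C j" using A C by simp
    then have "x \<in> col_space A" unfolding col_space_eq[OF A] using A C j by auto
    then show "x \<in> span (set (cols A))" unfolding col_space_def .
  qed
  have cA: "set (cols A) \<subseteq> carrier_vec n" using cols_dim[of A] A by simp
  have cAC: "set (cols (A * C)) \<subseteq> carrier_vec n" using cols_dim[of "A * C"] A C by simp
  have sA: "VectorSpace.subspace class_ring (span (set (cols A))) V"
    by (rule span_is_subspace) (use cA in simp)
  have sAC: "VectorSpace.subspace class_ring (span (set (cols (A * C)))) V"
    by (rule span_is_subspace) (use cAC in simp)
  have "span (set (cols (A * C))) \<subseteq> span (set (cols A))"
    using sub sA by (simp add: span_is_subset subspace_def)
  then have ss: "VectorSpace.subspace class_ring (span (set (cols (A * C)))) (vs (span (set (cols A))))"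
    using nested_subspaces[OF sA sAC] by blast
  have vsA: "vectorspace class_ring (vs (span (set (cols A))))" using sA subspace_is_vs by blast
  have finA: "vectorspace.fin_dim class_ring (vs (span (set (cols A))))"
    using fin_dim_span_cols[OF A] by simp
  have finAC: "vectorspace.fin_dim class_ring (vs (span (set (cols (A * C)))))"
    using fin_dim_span_cols[OF mult_carrier_mat[OF A C]] by simp
  have "vectorspace.dim class_ring ((vs (span (set (cols A))))\<lparr>carrier := span (set (cols (A * C)))\<rparr>) \<le> vectorspace.dim class_ring (vs (span (set (cols A))))"
    by (rule vectorspace.subspace_dim[OF vsA ss finA]) (use finAC in simp)
  then show ?thesis using A C unfolding mrank_def by (simp add: rank_def)
qed


lemma injm_cancel: assumes A: "A \<in> carrier_mat n m" and inj: "injm A"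
  and Z: "Z \<in> carrier_mat m k" and AZ: "A * Z = 0\<^sub>m n k"
  shows "Z = 0\<^sub>m m k"
proof (rule eq_matI)
  fix i j assume ij: "i < dim_row (0\<^sub>m m k :: complex mat)" "j < dim_col (0\<^sub>m m k :: complex mat)"
  have "A *\<^sub>v col Z j = col (A * Z) j" using A Z ij by simp
  also have "\<dots> = 0\<^sub>v n" using AZ ij by simp
  finally have h0: "A *\<^sub>v col Z j = 0\<^sub>v (dim_row A)" using A by simp
  have cz: "col Z j \<in> carrier_vec (dim_col A)" using col_dim[of Z j] Z A by simp
  have "col Z j = 0\<^sub>v (dim_col A)" by (rule injmD[OF inj cz h0])
  then have "col Z j $ i = 0" using ij A by simp
  then show "Z $$ (i, j) = 0\<^sub>m m k $$ (i, j)" using ij Z by simp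
qed (use Z in simp_all)

lemma injmI: assumes A: "A \<in> carrier_mat n m"
  and h: "\<And>Z. Z \<in> carrier_mat m 1 \<Longrightarrow> A * Z = 0\<^sub>m n 1 \<Longrightarrow> Z = 0\<^sub>m m 1"
  shows "injm A"
  unfolding injm_def
proof (intro ballI impI)
  fix v :: "complex vec" assume v: "v \<in> carrier_vec (dim_col A)" and Av: "A *\<^sub>v v = 0\<^sub>v (dim_row A)"
  define Z where "Z = mat_of_cols m [v]"
  have Zc0: "Z \<in> carrier_mat m (length [v])" unfolding Z_def by (rule mat_of_cols_carrier(1))
  have l1: "length [v] = 1" by simp
  have Zc: "Z \<in> carrier_mat m 1" using Zc0 unfolding l1 .
  have vm: "v \<in> carrier_vec m" using v A by simp
  have cz: "col Z 0 = v" unfolding Z_def using vm by simp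
  have "A * Z = 0\<^sub>m n 1"
  proof (rule eq_matI)
    fix i j assume ij: "i < dim_row (0\<^sub>m n 1 :: complex mat)" "j < dim_col (0\<^sub>m n 1 :: complex mat)"
    then have j: "j = 0" and i: "i < n" by auto
    have "(A * Z) $$ (i, j) = row A i \<bullet> col Z j" using i j A Zc by simp
    also have "\<dots> = row A i \<bullet> v" using cz j by simp
    also have "\<dots> = (A *\<^sub>v v) $ i" using i A by simp
    also have "\<dots> = 0" using Av i A by simp
    finally show "(A * Z) $$ (i, j) = 0\<^sub>m n 1 $$ (i, j)" using i j by simp
  next
    show "dim_row (A * Z) = dim_row (0\<^sub>m n 1 :: complex mat)" using A by simp
  next
    show "dim_col (A * Z) = dim_col (0\<^sub>m n 1 :: complex mat)" using Zc by simp
  qed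
  then have "Z = 0\<^sub>m m 1" by (rule h[OF Zc])
  then have "col Z 0 = 0\<^sub>v m" by simp
  then show "v = 0\<^sub>v (dim_col A)" using cz A by simp
qed

lemma injm_mult: assumes A: "A \<in> carrier_mat n m" and C: "C \<in> carrier_mat m k"
  and "injm A" "injm C" shows "injm (A * C)"
proof (rule injmI[OF mult_carrier_mat[OF A C]])
  fix Z assume Z: "Z \<in> carrier_mat k 1" and h: "A * C * Z = 0\<^sub>m n 1"
  have "A * (C * Z) = 0\<^sub>m n 1" using h assoc_mult_mat[OF A C Z] by simp
  then have "C * Z = 0\<^sub>m m 1" by (rule injm_cancel[OF A assms(3) mult_carrier_mat[OF C Z]])
  then show "Z = 0\<^sub>m k 1" using injm_cancel[OF C assms(4) Z] by blast
qed

lemma injm_inv: assumes A: "A \<in> carrier_mat n n" and inj: "injm A"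
  shows "\<exists>B \<in> carrier_mat n n. B * A = 1\<^sub>m n \<and> A * B = 1\<^sub>m n"
proof -
  have "det A \<noteq> 0"
  proof
    assume "det A = 0"
    then obtain v where "v \<in> carrier_vec n" "v \<noteq> 0\<^sub>v n" "A *\<^sub>v v = 0\<^sub>v n"
      using det_0_iff_vec_prod_zero_field[OF A] by blast
    then show False using injmD[OF inj] A by auto
  qed
  from det_non_zero_imp_unit[OF A this, of "()"]
  show ?thesis unfolding Units_def ring_mat_def by auto
qed

lemma rank_witness: assumes k: "k \<le> mrank A"
  shows "\<exists>C \<in> carrier_mat (dim_col A) k. injm (A * C)"
proof -
  define n m where "n = dim_row A" and "m = dim_col A"
  have A: "A \<in> carrier_mat n m" unfolding n_def m_def by simp
  interpret vec_space "TYPE(complex)" n .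
  obtain S where S: "maximal S (\<lambda>T. T \<subseteq> set (cols A) \<and> lin_indpt T)"
    using maximal_exists[of "(\<lambda>T. T \<subseteq> set (cols A) \<and> lin_indpt T)" "card (set (cols A))" "{}"]
    by (meson List.finite_set card_mono empty_iff empty_subsetI finite_lin_indpt2 rev_finite_subset)
  have rS: "rank A = card S" using rank_card_indpt[OF A S] .
  have Ssub: "S \<subseteq> set (cols A)" and Sli: "lin_indpt S" using S unfolding maximal_def by auto
  have "k \<le> card S" using k rS unfolding mrank_def n_def by simp
  then obtain T where T: "T \<subseteq> S" "card T = k" by (meson obtain_subset_with_card_n)
  have finS: "finite S" using Ssub finite_subset by blast
  have finT: "finite T" using T(1) finS finite_subset by blast
  have cV: "set (cols A) \<subseteq> carrier_vec n" using cols_dim[of A] A by simp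
  have Tli: "lin_indpt T" using Sli T(1) Ssub cV subset_li_is_li by blast
  obtain ts where ts: "set ts = T" "distinct ts" using finite_distinct_list[OF finT] by blast
  have lts: "length ts = k" using distinct_card[OF ts(2)] ts(1) T(2) by simp
  have tsin: "\<And>i. i < k \<Longrightarrow> \<exists>j < m. col A j = ts ! i"
  proof -
    fix i assume "i < k"
    then have "ts ! i \<in> set (cols A)" using lts ts(1) T(1) Ssub nth_mem by blast
    then show "\<exists>j < m. col A j = ts ! i" using A by (auto simp: in_set_conv_nth)
  qed
  define idx where "idx i = (SOME j. j < m \<and> col A j = ts ! i)" for i
  have idx: "\<And>i. i < k \<Longrightarrow> idx i < m \<and> col A (idx i) = ts ! i"
    unfolding idx_def using tsin by (metis (mono_tags, lifting) someI_ex)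
  define C :: "complex mat" where "C = mat m k (\<lambda>(r, i). if r = idx i then 1 else 0)"
  have C: "C \<in> carrier_mat m k" unfolding C_def by simp
  have tsV: "set ts \<subseteq> carrier_vec n" using ts(1) T(1) Ssub cV by blast
  have AC: "A * C = mat_of_cols n ts"
  proof (rule eq_matI)
    fix r i assume ri: "r < dim_row (mat_of_cols n ts)" "i < dim_col (mat_of_cols n ts)"
    then have r: "r < n" and i: "i < k" using lts by auto
    have cC: "col C i = unit_vec m (idx i)"
      by (rule eq_vecI) (use i idx[OF i] in \<open>auto simp: C_def\<close>)
    have "(A * C) $$ (r, i) = col (A * C) i $ r" using A C r i by simp
    also have "\<dots> = (A *\<^sub>v unit_vec m (idx i)) $ r" using A C i cC by simp
    also have "\<dots> = col A (idx i) $ r" using mult_unit_col[of "idx i" A] idx[OF i] A by simp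
    also have "\<dots> = (ts ! i) $ r" using idx[OF i] by simp
    also have "\<dots> = mat_of_cols n ts $$ (r, i)" using r i lts by (simp add: mat_of_cols_def)
    finally show "(A * C) $$ (r, i) = mat_of_cols n ts $$ (r, i)" .
  qed (use A C lts in simp_all)
  have "injm (A * C)"
    unfolding injm_def
  proof (intro ballI impI)
    fix v assume v: "v \<in> carrier_vec (dim_col (A * C))" and Av: "(A * C) *\<^sub>v v = 0\<^sub>v (dim_row (A * C))"
    show "v = 0\<^sub>v (dim_col (A * C))"
    proof (rule ccontr)
      assume vn: "v \<noteq> 0\<^sub>v (dim_col (A * C))"
      have M0: "mat_of_cols n ts \<in> carrier_mat n (length ts)" by (rule mat_of_cols_carrier(1))
      have M: "mat_of_cols n ts \<in> carrier_mat n k" using M0 unfolding lts .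
      have "lin_dep (set (cols (mat_of_cols n ts)))"
        by (rule lin_depI[OF M]) (use v vn Av AC A C lts tsV ts(2) in auto)
      then show False using Tli ts(1) tsV by simp
    qed
  qed
  then show ?thesis using C m_def by blast
qed

lemma rank_full_col_injm: assumes "mrank A = dim_col A" shows "injm A"
proof -
  define n m where "n = dim_row A" and "m = dim_col A"
  have A: "A \<in> carrier_mat n m" unfolding n_def m_def by simp
  obtain C where C: "C \<in> carrier_mat m m" and iAC: "injm (A * C)"
    using rank_witness[of m A] assms m_def by auto
  have iC: "injm C"
  proof (rule injmI[OF C])
    fix Z assume Z: "Z \<in> carrier_mat m 1" and h: "C * Z = 0\<^sub>m m 1"
    have "A * C * Z = 0\<^sub>m n 1" using h A C Z by (simp add: assoc_mult_mat)
    then show "Z = 0\<^sub>m m 1" using injm_cancel[OF mult_carrier_mat[OF A C] iAC Z] by blast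
  qed
  obtain E where E: "E \<in> carrier_mat m m" "E * C = 1\<^sub>m m" "C * E = 1\<^sub>m m" using injm_inv[OF C iC] by blast
  show ?thesis
  proof (rule injmI[OF A])
    fix Z assume Z: "Z \<in> carrier_mat m 1" and h: "A * Z = 0\<^sub>m n 1"
    have e1: "A * C * (E * Z) = A * (C * (E * Z))" by (rule assoc_mult_mat[OF A C mult_carrier_mat[OF E(1) Z]])
    have e2: "C * (E * Z) = (C * E) * Z" by (rule assoc_mult_mat[symmetric, OF C E(1) Z])
    have e3: "(C * E) * Z = Z" using E(3) left_mult_one_mat[OF Z] by simp
    have "A * C * (E * Z) = 0\<^sub>m n 1" unfolding e1 e2 e3 by (rule h)
    then have "E * Z = 0\<^sub>m m 1" by (rule injm_cancel[OF mult_carrier_mat[OF A C] iAC mult_carrier_mat[OF E(1) Z]])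
    then have "C * (E * Z) = 0\<^sub>m m 1" using C by simp
    then show "Z = 0\<^sub>m m 1" using E Z C by (simp add: assoc_mult_mat[symmetric])
  qed
qed

lemma rank_full_row_cancel: assumes A: "A \<in> carrier_mat n m" and r: "mrank A = n"
  and Z: "Z \<in> carrier_mat p n" and ZA: "Z * A = 0\<^sub>m p m"
  shows "Z = 0\<^sub>m p n"
proof -
  obtain C where C: "C \<in> carrier_mat m n" and iAC: "injm (A * C)"
    using rank_witness[of n A] r A by auto
  obtain E where E: "E \<in> carrier_mat n n" "(A * C) * E = 1\<^sub>m n"
    using injm_inv[OF mult_carrier_mat[OF A C] iAC] by blast
  have "Z = Z * 1\<^sub>m n" using right_mult_one_mat[OF Z] by simp
  also have "\<dots> = Z * ((A * C) * E)" by (simp only: E(2))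
  also have "\<dots> = (Z * (A * C)) * E" by (rule assoc_mult_mat[symmetric, OF Z mult_carrier_mat[OF A C] E(1)])
  also have "Z * (A * C) = (Z * A) * C" by (rule assoc_mult_mat[symmetric, OF Z A C])
  also have "((Z * A) * C) * E = 0\<^sub>m p n" using ZA C E by simp
  finally show ?thesis .
qed

lemma nonzero_inj_col: assumes Z: "Z \<in> carrier_mat n m" and nz: "Z \<noteq> 0\<^sub>m n m"
  shows "\<exists>c \<in> carrier_mat m 1. injm (Z * c)"
proof -
  obtain i j where ij: "i < n" "j < m" "Z $$ (i, j) \<noteq> 0"
    using nz Z by (metis eq_matI carrier_matD(1,2) index_zero_mat(1,2,3))
  define c :: "complex mat" where "c = mat m 1 (\<lambda>(r, _). if r = j then 1 else 0)"
  have c: "c \<in> carrier_mat m 1" unfolding c_def by simp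
  have e: "\<And>r. r < n \<Longrightarrow> (Z * c) $$ (r, 0) = Z $$ (r, j)"
  proof -
    fix r assume r: "r < n"
    have cc: "col c 0 = unit_vec m j" by (rule eq_vecI) (use ij in \<open>auto simp: c_def\<close>)
    have "(Z * c) $$ (r, 0) = row Z r \<bullet> unit_vec m j" using Z c r cc by simp
    also have "\<dots> = Z $$ (r, j)" using ij r Z by simp
    finally show "(Z * c) $$ (r, 0) = Z $$ (r, j)" .
  qed
  have "injm (Z * c)"
    unfolding injm_def
  proof (intro ballI impI)
    fix v :: "complex vec" assume v: "v \<in> carrier_vec (dim_col (Z * c))" and h: "(Z * c) *\<^sub>v v = 0\<^sub>v (dim_row (Z * c))"
    have v1: "v \<in> carrier_vec 1" using v c by simp
    have "((Z * c) *\<^sub>v v) $ i = row (Z * c) i \<bullet> v" using ij Z c by simp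
    also have "\<dots> = (Z * c) $$ (i, 0) * v $ 0" using v1 ij Z c by (simp add: scalar_prod_def)
    also have "\<dots> = Z $$ (i, j) * v $ 0" using e ij by simp
    finally have "Z $$ (i, j) * v $ 0 = 0" using h ij Z c by simp
    then have "v $ 0 = 0" using ij by simp
    then show "v = 0\<^sub>v (dim_col (Z * c))" using v1 c by (auto intro!: eq_vecI)
  qed
  then show ?thesis using c by blast
qed


lemma hstack_carrier: assumes "A \<in> carrier_mat n a" "C \<in> carrier_mat n b"
  shows "hstack A C \<in> carrier_mat n (a + b)"
  using assms unfolding hstack_def by auto

lemma vstack_carrier: assumes "X \<in> carrier_mat a k" "Y \<in> carrier_mat b k"
  shows "vstack X Y \<in> carrier_mat (a + b) k"
  using assms unfolding vstack_def by auto

lemma sum_split_nat: fixes a b :: nat and f :: "nat \<Rightarrow> 'c::comm_monoid_add" shows "(\<Sum>l\<in>{0..<a+b}. f l) = (\<Sum>l\<in>{0..<a}. f l) + (\<Sum>l\<in>{0..<b}. f (l + a))"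
proof -
  have "(\<Sum>l\<in>{0..<a+b}. f l) = (\<Sum>l\<in>{0..<a}. f l) + (\<Sum>l\<in>{a..<a+b}. f l)"
    using sum.atLeastLessThan_concat[where m=0 and n=a and p="a+b" and g=f] by simp
  also have "(\<Sum>l\<in>{a..<a+b}. f l) = (\<Sum>l\<in>{0..<b}. f (l + a))"
    using sum.shift_bounds_nat_ivl[of f 0 a b] by (simp add: add.commute)
  finally show ?thesis .
qed

lemma hstack_mult_vstack:
  assumes A: "A \<in> carrier_mat n a" and C: "C \<in> carrier_mat n b"
    and X: "X \<in> carrier_mat a k" and Y: "Y \<in> carrier_mat b k"
  shows "hstack A C * vstack X Y = A * X + C * Y"
proof (rule eq_matI)
  fix i j assume ij: "i < dim_row (A * X + C * Y)" "j < dim_col (A * X + C * Y)"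
  then have i: "i < n" and j: "j < k" using A C X Y by auto
  have "(hstack A C * vstack X Y) $$ (i, j) = (\<Sum>l\<in>{0..<a+b}. hstack A C $$ (i, l) * vstack X Y $$ (l, j))"
    using i j hstack_carrier[OF A C] vstack_carrier[OF X Y] by (simp add: scalar_prod_def)
  also have "\<dots> = (\<Sum>l\<in>{0..<a}. hstack A C $$ (i, l) * vstack X Y $$ (l, j))
      + (\<Sum>l\<in>{0..<b}. hstack A C $$ (i, l + a) * vstack X Y $$ (l + a, j))"
    by (rule sum_split_nat)
  also have "(\<Sum>l\<in>{0..<a}. hstack A C $$ (i, l) * vstack X Y $$ (l, j)) = (\<Sum>l\<in>{0..<a}. A $$ (i, l) * X $$ (l, j))"
    by (rule sum.cong) (use i j A C X Y in \<open>auto simp: hstack_def vstack_def\<close>)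
  also have "(\<Sum>l\<in>{0..<b}. hstack A C $$ (i, l + a) * vstack X Y $$ (l + a, j)) = (\<Sum>l\<in>{0..<b}. C $$ (i, l) * Y $$ (l, j))"
    by (rule sum.cong) (use i j A C X Y in \<open>auto simp: hstack_def vstack_def\<close>)
  also have "(\<Sum>l\<in>{0..<a}. A $$ (i, l) * X $$ (l, j)) + (\<Sum>l\<in>{0..<b}. C $$ (i, l) * Y $$ (l, j))
      = (A * X + C * Y) $$ (i, j)"
    using i j A C X Y by (simp add: scalar_prod_def)
  finally show "(hstack A C * vstack X Y) $$ (i, j) = (A * X + C * Y) $$ (i, j)" .
qed (use A C X Y in \<open>auto simp: hstack_def vstack_def\<close>)

lemma mult_hstack:
  assumes L: "L \<in> carrier_mat p n" and A: "A \<in> carrier_mat n a" and C: "C \<in> carrier_mat n b"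
  shows "L * hstack A C = hstack (L * A) (L * C)"
proof (rule eq_matI)
  fix i j assume ij: "i < dim_row (hstack (L * A) (L * C))" "j < dim_col (hstack (L * A) (L * C))"
  then have i: "i < p" and j: "j < a + b" using L A C by (auto simp: hstack_def)
  have "(L * hstack A C) $$ (i, j) = row L i \<bullet> col (hstack A C) j"
    using i j L hstack_carrier[OF A C] by simp
  also have "col (hstack A C) j = (if j < a then col A j else col C (j - a))"
    by (rule eq_vecI) (use j A C in \<open>auto simp: hstack_def\<close>)
  finally show "(L * hstack A C) $$ (i, j) = hstack (L * A) (L * C) $$ (i, j)"
    using i j L A C by (auto simp: hstack_def)
qed (use L A C in \<open>auto simp: hstack_def\<close>)

lemma vstack_mult:
  assumes X: "X \<in> carrier_mat a m" and Y: "Y \<in> carrier_mat b m" and C: "C \<in> carrier_mat m k"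
  shows "vstack X Y * C = vstack (X * C) (Y * C)"
proof (rule eq_matI)
  fix i j assume ij: "i < dim_row (vstack (X * C) (Y * C))" "j < dim_col (vstack (X * C) (Y * C))"
  then have i: "i < a + b" and j: "j < k" using X Y C by (auto simp: vstack_def)
  have "(vstack X Y * C) $$ (i, j) = row (vstack X Y) i \<bullet> col C j"
    using i j C vstack_carrier[OF X Y] by simp
  also have "row (vstack X Y) i = (if i < a then row X i else row Y (i - a))"
    by (rule eq_vecI) (use i X Y in \<open>auto simp: vstack_def\<close>)
  finally show "(vstack X Y * C) $$ (i, j) = vstack (X * C) (Y * C) $$ (i, j)"
    using i j X Y C by (auto simp: vstack_def)
qed (use X Y C in \<open>auto simp: vstack_def\<close>)

lemma vstack_split:
  assumes Z: "Z \<in> carrier_mat (a + b) k"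
  shows "Z = vstack (mat a k (\<lambda>(i, j). Z $$ (i, j))) (mat b k (\<lambda>(i, j). Z $$ (a + i, j)))"
  by (rule eq_matI) (use Z in \<open>auto simp: vstack_def\<close>)

lemma vstack_zero: "vstack (0\<^sub>m a k) (0\<^sub>m b k) = (0\<^sub>m (a + b) k :: complex mat)"
  by (rule eq_matI) (auto simp: vstack_def)

lemma vstack_zero_bot: assumes X: "X \<in> carrier_mat a k" and Y: "Y \<in> carrier_mat b k"
  and h: "vstack X Y = 0\<^sub>m (a + b) k" shows "Y = 0\<^sub>m b k"
proof (rule eq_matI)
  fix i j assume ij: "i < dim_row (0\<^sub>m b k :: complex mat)" "j < dim_col (0\<^sub>m b k :: complex mat)"
  have "vstack X Y $$ (a + i, j) = Y $$ (i, j)" using ij X Y by (simp add: vstack_def)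
  then show "Y $$ (i, j) = 0\<^sub>m b k $$ (i, j)" using h ij by simp
qed (use Y in simp_all)

lemma injm_hstack:
  assumes A: "A \<in> carrier_mat n a" and C: "C \<in> carrier_mat n b" and L: "L \<in> carrier_mat p n"
    and iA: "injm A" and iLC: "injm (L * C)" and LA: "L * A = 0\<^sub>m p a"
  shows "injm (hstack A C)"
proof (rule injmI[OF hstack_carrier[OF A C]])
  fix Z assume Z: "Z \<in> carrier_mat (a + b) 1" and h: "hstack A C * Z = 0\<^sub>m n 1"
  define Z1 where "Z1 = mat a 1 (\<lambda>(i, j). Z $$ (i, j))"
  define Z2 where "Z2 = mat b 1 (\<lambda>(i, j). Z $$ (a + i, j))"
  have Z1: "Z1 \<in> carrier_mat a 1" unfolding Z1_def by simp
  have Z2: "Z2 \<in> carrier_mat b 1" unfolding Z2_def by simp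
  have ZZ: "Z = vstack Z1 Z2" unfolding Z1_def Z2_def by (rule vstack_split[OF Z])
  have e: "A * Z1 + C * Z2 = 0\<^sub>m n 1" using h hstack_mult_vstack[OF A C Z1 Z2] ZZ by simp
  have "L * (A * Z1 + C * Z2) = L * A * Z1 + L * C * Z2"
    using mult_add_distrib_mat[OF L mult_carrier_mat[OF A Z1] mult_carrier_mat[OF C Z2]]
      assoc_mult_mat[OF L A Z1] assoc_mult_mat[OF L C Z2] by simp
  also have "\<dots> = L * C * Z2" using LA Z1 L C Z2 by simp
  finally have "L * C * Z2 = 0\<^sub>m p 1" using e L by simp
  then have Z20: "Z2 = 0\<^sub>m b 1" by (rule injm_cancel[OF mult_carrier_mat[OF L C] iLC Z2])
  then have "A * Z1 = 0\<^sub>m n 1" using e A C Z1 by simp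
  then have Z10: "Z1 = 0\<^sub>m a 1" by (rule injm_cancel[OF A iA Z1])
  show "Z = 0\<^sub>m (a + b) 1" unfolding ZZ Z10 Z20 by (rule vstack_zero)
qed


lemma adj_zero[simp]: "mat_adjoint (0\<^sub>m n m :: complex mat) = 0\<^sub>m m n"
  by (rule eq_matI) simp_all

lemma cnj_mult_self: "cnj z * z = complex_of_real ((cmod z)^2)"
  using complex_norm_square[of z] by (simp add: mult.commute)

lemma gram_zero: fixes M :: "complex mat" assumes M: "M \<in> carrier_mat a b" and h: "mat_adjoint M * M = 0\<^sub>m b b"
  shows "M = 0\<^sub>m a b"
proof (rule eq_matI)
  fix i j assume ij: "i < dim_row (0\<^sub>m a b :: complex mat)" "j < dim_col (0\<^sub>m a b :: complex mat)"
  then have i: "i < a" and j: "j < b" by auto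
  have "(mat_adjoint M * M) $$ (j, j) = (\<Sum>l\<in>{0..<a}. cnj (M $$ (l, j)) * M $$ (l, j))"
    using M j by (simp add: scalar_prod_def)
  also have "\<dots> = (\<Sum>l\<in>{0..<a}. complex_of_real ((cmod (M $$ (l, j)))^2))"
    by (simp add: cnj_mult_self)
  also have "\<dots> = complex_of_real (\<Sum>l\<in>{0..<a}. (cmod (M $$ (l, j)))^2)" by simp
  finally have "complex_of_real (\<Sum>l\<in>{0..<a}. (cmod (M $$ (l, j)))^2) = 0" using h j by simp
  then have "(\<Sum>l\<in>{0..<a}. (cmod (M $$ (l, j)))^2) = 0" by (simp only: of_real_eq_0_iff)
  then have "\<forall>l\<in>{0..<a}. (cmod (M $$ (l, j)))^2 = 0" by (subst (asm) sum_nonneg_eq_0_iff) auto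
  then have "M $$ (i, j) = 0" using i by simp
  then show "M $$ (i, j) = 0\<^sub>m a b $$ (i, j)" using i j by simp
qed (use M in simp_all)

lemma frob_nonneg: "frob_sq M \<ge> 0"
  unfolding frob_sq_def by (intro sum_nonneg) auto

lemma frob_zero_mat: "frob_sq (0\<^sub>m a b) = 0"
  unfolding frob_sq_def by simp

lemma frob_zero: fixes M :: "complex mat" assumes M: "M \<in> carrier_mat a b" and h: "frob_sq M = 0"
  shows "M = 0\<^sub>m a b"
proof (rule eq_matI)
  fix i j assume ij: "i < dim_row (0\<^sub>m a b :: complex mat)" "j < dim_col (0\<^sub>m a b :: complex mat)"
  then have i: "i < a" and j: "j < b" by auto
  have "(\<Sum>i<a. \<Sum>j<b. (cmod (M $$ (i, j)))\<^sup>2) = 0" using h M unfolding frob_sq_def by simp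
  then have "\<forall>i\<in>{..<a}. (\<Sum>j<b. (cmod (M $$ (i, j)))\<^sup>2) = 0"
    by (subst (asm) sum_nonneg_eq_0_iff) (auto intro: sum_nonneg)
  then have "(\<Sum>j<b. (cmod (M $$ (i, j)))\<^sup>2) = 0" using i by simp
  then have "\<forall>j\<in>{..<b}. (cmod (M $$ (i, j)))\<^sup>2 = 0"
    by (subst (asm) sum_nonneg_eq_0_iff) auto
  then have "M $$ (i, j) = 0" using j by simp
  then show "M $$ (i, j) = 0\<^sub>m a b $$ (i, j)" using i j by simp
qed (use M in simp_all)

lemma inv_hermitian: fixes G Gi :: "complex mat"
  assumes G: "G \<in> carrier_mat n n" and Gi: "Gi \<in> carrier_mat n n"
    and GG: "Gi * G = 1\<^sub>m n" and hG: "mat_adjoint G = G"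
  shows "mat_adjoint Gi = Gi"
proof -
  have "mat_adjoint (Gi * G) = 1\<^sub>m n" using GG by simp
  then have 1: "G * mat_adjoint Gi = 1\<^sub>m n" using adj_mult[OF Gi G] hG by simp
  have "(Gi * G) * mat_adjoint Gi = mat_adjoint Gi" unfolding GG by (rule left_mult_one_mat[OF adj_carrier[OF Gi]])
  then have "mat_adjoint Gi = (Gi * G) * mat_adjoint Gi" by simp
  also have "\<dots> = Gi * (G * mat_adjoint Gi)" by (rule assoc_mult_mat[OF Gi G adj_carrier[OF Gi]])
  also have "\<dots> = Gi" using 1 Gi by simp
  finally show ?thesis .
qed

lemma pinv_row: fixes S :: "complex mat" assumes S: "S \<in> carrier_mat U T" and r: "mrank S = U"
  shows "pinv S \<in> carrier_mat T U \<and> S * pinv S = 1\<^sub>m U"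
proof -
  define Sh where "Sh = mat_adjoint S"
  have Sh: "Sh \<in> carrier_mat T U" unfolding Sh_def by (rule adj_carrier[OF S])
  define G where "G = S * Sh"
  have G: "G \<in> carrier_mat U U" unfolding G_def using S Sh by simp
  have aSh: "mat_adjoint Sh = S" unfolding Sh_def by simp
  have hG: "mat_adjoint G = G" unfolding G_def using adj_mult[OF S Sh] aSh Sh_def by simp
  have iG: "injm G"
  proof (rule injmI[OF G])
    fix Z assume Z: "Z \<in> carrier_mat U 1" and h: "G * Z = 0\<^sub>m U 1"
    define W where "W = Sh * Z"
    have W: "W \<in> carrier_mat T 1" unfolding W_def using Sh Z by simp
    have aZ: "mat_adjoint Z \<in> carrier_mat 1 U" by (rule adj_carrier[OF Z])
    have aW: "mat_adjoint W = mat_adjoint Z * S" unfolding W_def using adj_mult[OF Sh Z] aSh by simp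
    have "mat_adjoint W * W = (mat_adjoint Z * S) * (Sh * Z)" by (subst aW) (simp add: W_def)
    also have "\<dots> = mat_adjoint Z * (S * (Sh * Z))"
      by (rule assoc_mult_mat[OF aZ S mult_carrier_mat[OF Sh Z]])
    also have "S * (Sh * Z) = G * Z" unfolding G_def by (rule assoc_mult_mat[symmetric, OF S Sh Z])
    also have "mat_adjoint Z * (G * Z) = 0\<^sub>m 1 1" unfolding h by (rule right_mult_zero_mat[OF aZ])
    finally have "W = 0\<^sub>m T 1" by (rule gram_zero[OF W])
    then have "mat_adjoint Z * S = 0\<^sub>m 1 T" using aW by (metis adj_zero)
    then have "mat_adjoint Z = 0\<^sub>m 1 U" by (rule rank_full_row_cancel[OF S r aZ])
    then have "mat_adjoint (mat_adjoint Z) = 0\<^sub>m U 1" by simp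
    then show "Z = 0\<^sub>m U 1" by simp
  qed
  obtain Gi where Gi: "Gi \<in> carrier_mat U U" "Gi * G = 1\<^sub>m U" "G * Gi = 1\<^sub>m U"
    using injm_inv[OF G iG] by blast
  have hGi: "mat_adjoint Gi = Gi" by (rule inv_hermitian[OF G Gi(1) Gi(2) hG])
  define X where "X = Sh * Gi"
  have X: "X \<in> carrier_mat T U" unfolding X_def using Sh Gi by simp
  have SX: "S * X = 1\<^sub>m U"
    unfolding X_def using assoc_mult_mat[symmetric, OF S Sh Gi(1)] Gi(3) G_def by simp
  have aX: "mat_adjoint X = Gi * S" unfolding X_def using adj_mult[OF Sh Gi(1)] hGi aSh by simp
  have "pen S X" unfolding pen_def
  proof (intro conjI)
    show "X \<in> carrier_mat (dim_col S) (dim_row S)" using X S by simp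
    show "S * X * S = S" using SX S by simp
    show "X * S * X = X" using assoc_mult_mat[OF X S X] SX X by simp
    show "mat_adjoint (S * X) = S * X" using SX by simp
    have "mat_adjoint (X * S) = mat_adjoint S * mat_adjoint X" by (rule adj_mult[OF X S])
    also have "\<dots> = Sh * (Gi * S)" unfolding aX Sh_def ..
    also have "\<dots> = X * S" unfolding X_def by (rule assoc_mult_mat[symmetric, OF Sh Gi(1) S])
    finally show "mat_adjoint (X * S) = X * S" .
  qed
  then have "pinv S = X" by (rule pinv_eq)
  then show ?thesis using X SX by simp
qed

lemma pinv_col: fixes J :: "complex mat" assumes J: "J \<in> carrier_mat n k" and iJ: "injm J"
  shows "pen J (pinv J) \<and> pinv J \<in> carrier_mat k n \<and> pinv J * J = 1\<^sub>m k"
proof -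
  define Jh where "Jh = mat_adjoint J"
  have Jh: "Jh \<in> carrier_mat k n" unfolding Jh_def by (rule adj_carrier[OF J])
  define G where "G = Jh * J"
  have G: "G \<in> carrier_mat k k" unfolding G_def using J Jh by simp
  have aJh: "mat_adjoint Jh = J" unfolding Jh_def by simp
  have hG: "mat_adjoint G = G" unfolding G_def using adj_mult[OF Jh J] aJh Jh_def by simp
  have iG: "injm G"
  proof (rule injmI[OF G])
    fix Z assume Z: "Z \<in> carrier_mat k 1" and h: "G * Z = 0\<^sub>m k 1"
    define W where "W = J * Z"
    have W: "W \<in> carrier_mat n 1" unfolding W_def using J Z by simp
    have aZ: "mat_adjoint Z \<in> carrier_mat 1 k" by (rule adj_carrier[OF Z])
    have aW: "mat_adjoint W = mat_adjoint Z * Jh" unfolding W_def Jh_def by (rule adj_mult[OF J Z])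
    have "mat_adjoint W * W = (mat_adjoint Z * Jh) * (J * Z)" by (subst aW) (simp add: W_def)
    also have "\<dots> = mat_adjoint Z * (Jh * (J * Z))"
      by (rule assoc_mult_mat[OF aZ Jh mult_carrier_mat[OF J Z]])
    also have "Jh * (J * Z) = G * Z" unfolding G_def by (rule assoc_mult_mat[symmetric, OF Jh J Z])
    also have "mat_adjoint Z * (G * Z) = 0\<^sub>m 1 1" unfolding h by (rule right_mult_zero_mat[OF aZ])
    finally have "W = 0\<^sub>m n 1" by (rule gram_zero[OF W])
    then have "J * Z = 0\<^sub>m n 1" unfolding W_def .
    then show "Z = 0\<^sub>m k 1" by (rule injm_cancel[OF J iJ Z])
  qed
  obtain Gi where Gi: "Gi \<in> carrier_mat k k" "Gi * G = 1\<^sub>m k" "G * Gi = 1\<^sub>m k"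
    using injm_inv[OF G iG] by blast
  have hGi: "mat_adjoint Gi = Gi" by (rule inv_hermitian[OF G Gi(1) Gi(2) hG])
  define X where "X = Gi * Jh"
  have X: "X \<in> carrier_mat k n" unfolding X_def using Jh Gi by simp
  have XJ: "X * J = 1\<^sub>m k"
    unfolding X_def using assoc_mult_mat[OF Gi(1) Jh J] Gi(2) G_def by simp
  have aX: "mat_adjoint X = J * Gi" unfolding X_def using adj_mult[OF Gi(1) Jh] hGi aJh by simp
  have "pen J X" unfolding pen_def
  proof (intro conjI)
    show "X \<in> carrier_mat (dim_col J) (dim_row J)" using X J by simp
    show "J * X * J = J" using assoc_mult_mat[OF J X J] XJ J by simp
    show "X * J * X = X" using XJ X by simp
    show "mat_adjoint (X * J) = X * J" using XJ by simp
    have "mat_adjoint (J * X) = mat_adjoint X * mat_adjoint J" by (rule adj_mult[OF J X])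
    also have "\<dots> = (J * Gi) * Jh" unfolding aX Jh_def ..
    also have "\<dots> = J * X" unfolding X_def by (rule assoc_mult_mat[OF J Gi(1) Jh])
    finally show "mat_adjoint (J * X) = J * X" .
  qed
  moreover have "pinv J = X" using \<open>pen J X\<close> by (rule pinv_eq)
  ultimately show ?thesis using X XJ by simp
qed


lemma qpsk_neg: "s \<in> qpsk \<Longrightarrow> - s \<in> qpsk"
proof -
  assume "s \<in> qpsk"
  then obtain a b where ab: "s = (complex_of_real a + \<i> * complex_of_real b) / complex_of_real (sqrt 2)"
    "a \<in> {-1, 1}" "b \<in> {-1, 1}" unfolding qpsk_def by blast
  have "- s = (complex_of_real (-a) + \<i> * complex_of_real (-b)) / complex_of_real (sqrt 2)"
    unfolding ab(1) by (simp add: field_simps)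
  moreover have "-a \<in> {-1, 1}" "-b \<in> {-1, 1}" using ab(2,3) by auto
  ultimately show "- s \<in> qpsk" unfolding qpsk_def by blast
qed

lemma qpsk_nz: "s \<in> qpsk \<Longrightarrow> s \<noteq> 0"
proof
  assume "s \<in> qpsk" "s = 0"
  then obtain a b where ab: "0 = (complex_of_real a + \<i> * complex_of_real b) / complex_of_real (sqrt 2)"
    "a \<in> {-1, 1}" "b \<in> {-1, 1}" unfolding qpsk_def by auto
  then have "complex_of_real a + \<i> * complex_of_real b = 0" by (simp add: field_simps)
  then have "Re (complex_of_real a + \<i> * complex_of_real b) = 0" by simp
  then have "a = 0" by simp
  then show False using ab(2) by simp
qed

lemma mrank_subadd: assumes "A \<in> carrier_mat n m" "C \<in> carrier_mat n m"
  shows "mrank (A + C) \<le> mrank A + mrank C"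
proof -
  interpret vec_space "TYPE(complex)" n .
  show ?thesis using rank_subadditive[OF assms] assms unfolding mrank_def by simp
qed

lemma mrank_le_cols: assumes "A \<in> carrier_mat n m" shows "mrank A \<le> m"
proof -
  interpret vec_space "TYPE(complex)" n .
  show ?thesis using rank_le_nc[OF assms] assms unfolding mrank_def by simp
qed

lemma mrank_le1: fixes f g :: "nat \<Rightarrow> complex"
  assumes A: "A \<in> carrier_mat n m" and e: "\<And>r c. r < n \<Longrightarrow> c < m \<Longrightarrow> A $$ (r, c) = f r * g c"
  shows "mrank A \<le> 1"
proof -
  interpret vec_space "TYPE(complex)" n .
  have "rank A \<le> 1" by (rule rank_le_1_product_entries[OF A]) (use e A in auto)
  then show ?thesis using A unfolding mrank_def by simp
qed

lemma injm_one: "injm (1\<^sub>m n)"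
  by (rule injmI[OF one_carrier_mat]) simp

lemma hstack_zero: "hstack (0\<^sub>m n a) (0\<^sub>m n b) = (0\<^sub>m n (a + b) :: complex mat)"
  by (rule eq_matI) (auto simp: hstack_def)

lemma idem_compl: fixes Q :: "complex mat" assumes Q: "Q \<in> carrier_mat n n" and QQ: "Q * Q = Q"
  shows "(1\<^sub>m n - Q) * (1\<^sub>m n - Q) = 1\<^sub>m n - Q"
proof -
  have "(1\<^sub>m n - Q) * (1\<^sub>m n - Q) = 1\<^sub>m n * (1\<^sub>m n - Q) - Q * (1\<^sub>m n - Q)"
    by (rule minus_mult_distrib_mat[OF one_carrier_mat Q minus_carrier_mat[OF Q]])
  also have "Q * (1\<^sub>m n - Q) = Q * 1\<^sub>m n - Q * Q"
    by (rule mult_minus_distrib_mat[OF Q one_carrier_mat Q])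
  also have "1\<^sub>m n * (1\<^sub>m n - Q) = 1\<^sub>m n - Q" using Q by simp
  finally show ?thesis using Q QQ by (intro eq_matI) auto
qed

lemma compl_plus: fixes Q :: "complex mat" assumes Q: "Q \<in> carrier_mat n n"
  shows "(1\<^sub>m n - Q) + Q = 1\<^sub>m n"
  by (rule eq_matI) (use Q in auto)


lemma minus_self_zero: fixes A :: "complex mat" assumes "A \<in> carrier_mat n m" shows "A - A = 0\<^sub>m n m"
  by (rule eq_matI) (use assms in auto)

lemma minus_zero_right: fixes A :: "complex mat" assumes "A \<in> carrier_mat n m" shows "A - 0\<^sub>m n m = A"
  by (rule eq_matI) (use assms in auto)

lemma zero_minus_zero: "0\<^sub>m n m - 0\<^sub>m n m = (0\<^sub>m n m :: complex mat)"
  by (rule eq_matI) auto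

lemma minus_eq_zero: fixes A B :: "complex mat" assumes "A \<in> carrier_mat n m" "B \<in> carrier_mat n m"
  and "A - B = 0\<^sub>m n m" shows "A = B"
proof (rule eq_matI)
  fix i j assume "i < dim_row B" "j < dim_col B"
  then have "(A - B) $$ (i, j) = 0" using assms by simp
  then show "A $$ (i, j) = B $$ (i, j)" using assms(1,2) \<open>i < dim_row B\<close> \<open>j < dim_col B\<close> by simp
qed (use assms in auto)

lemma core_contra:
  assumes P: "P \<in> proj_grass (n - k) n" and A: "A \<in> carrier_mat n (k + 1)" and iA: "injm A"
    and PA: "P * A = 0\<^sub>m n (k + 1)" and kn: "k \<le> n"
  shows False
proof -
  have Pc: "P \<in> carrier_mat n n" and PP: "P * P = P" and rP: "mrank P = n - k"
    using P unfolding proj_grass_def by auto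
  obtain C where C: "C \<in> carrier_mat n (n - k)" and iPC: "injm (P * C)"
    using rank_witness[of "n - k" P] rP Pc by auto
  have "P * (P * C) = P * C" using assoc_mult_mat[OF Pc Pc C] PP by simp
  then have i2: "injm (P * (P * C))" using iPC by simp
  have "injm (hstack A (P * C))"
    by (rule injm_hstack[OF A mult_carrier_mat[OF Pc C] Pc iA i2 PA])
  then have "dim_col (hstack A (P * C)) \<le> dim_row (hstack A (P * C))" by (rule injm_le_rows)
  moreover have "hstack A (P * C) \<in> carrier_mat n ((k + 1) + (n - k))"
    by (rule hstack_carrier[OF A mult_carrier_mat[OF Pc C]])
  ultimately show False using kn by simp
qed

lemma phat_props:
  assumes J: "J \<in> carrier_mat n k" and iJ: "injm J" and kn: "k \<le> n"
  shows "(1\<^sub>m n - J * pinv J) \<in> proj_grass (n - k) n"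
    and "(1\<^sub>m n - J * pinv J) * J = 0\<^sub>m n k"
    and "pinv J * (1\<^sub>m n - J * pinv J) = 0\<^sub>m k n"
proof -
  define X where "X = pinv J"
  have pj: "pen J X" and X: "X \<in> carrier_mat k n" and XJ: "X * J = 1\<^sub>m k"
    using pinv_col[OF J iJ] unfolding X_def by auto
  have JXJ: "J * X * J = J" and XJX: "X * J * X = X" and hQ: "mat_adjoint (J * X) = J * X"
    using pj unfolding pen_def by auto
  define Q where "Q = J * X"
  have Q: "Q \<in> carrier_mat n n" unfolding Q_def using J X by simp
  have QJ: "Q * J = J" unfolding Q_def using JXJ .
  have QQ: "Q * Q = Q" unfolding Q_def using assoc_mult_mat[symmetric, OF mult_carrier_mat[OF J X] J X] JXJ by simp
  have XQ: "X * Q = X" unfolding Q_def using assoc_mult_mat[symmetric, OF X J X] XJX by simp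
  define P where "P = 1\<^sub>m n - Q"
  have Pc: "P \<in> carrier_mat n n" unfolding P_def by (rule minus_carrier_mat[OF Q])
  have PP: "P * P = P" unfolding P_def by (rule idem_compl[OF Q QQ])
  have hP: "mat_adjoint P = P" unfolding P_def using adj_minus[OF one_carrier_mat Q] hQ Q_def by simp
  have PJ: "P * J = 0\<^sub>m n k"
  proof -
    have "P * J = 1\<^sub>m n * J - Q * J" unfolding P_def by (rule minus_mult_distrib_mat[OF one_carrier_mat Q J])
    also have "\<dots> = J - J" using QJ J by simp
    finally show ?thesis using minus_self_zero[OF J] by simp
  qed
  have XP: "X * P = 0\<^sub>m k n"
  proof -
    have "X * P = X * 1\<^sub>m n - X * Q" unfolding P_def by (rule mult_minus_distrib_mat[OF X one_carrier_mat Q])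
    also have "\<dots> = X - X" using XQ X by simp
    finally show ?thesis using minus_self_zero[OF X] by simp
  qed
  have r1: "n \<le> mrank P + k"
  proof -
    have "n = mrank (1\<^sub>m n :: complex mat)" using injm_rank[OF injm_one[of n]] by simp
    also have "1\<^sub>m n = P + Q" unfolding P_def using compl_plus[OF Q] by simp
    also have "mrank (P + Q) \<le> mrank P + mrank Q" by (rule mrank_subadd[OF Pc Q])
    also have "mrank Q \<le> mrank J" unfolding Q_def by (rule rank_mult_le[OF J X])
    also have "mrank J \<le> k" by (rule mrank_le_cols[OF J])
    finally show ?thesis by simp
  qed
  have r2: "mrank P \<le> n - k"
  proof (rule ccontr)
    assume "\<not> mrank P \<le> n - k"
    then have "n - k + 1 \<le> mrank P" by simp
    then obtain C where C: "C \<in> carrier_mat n (n - k + 1)" and iPC: "injm (P * C)"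
      using rank_witness[of "n - k + 1" P] Pc by auto
    have "X * (P * C) = 0\<^sub>m k (n - k + 1)"
      using assoc_mult_mat[symmetric, OF X Pc C] XP C by simp
    moreover have "injm (X * J)" using XJ injm_one by simp
    ultimately have "injm (hstack (P * C) J)"
      using injm_hstack[OF mult_carrier_mat[OF Pc C] J X iPC] by blast
    then have "dim_col (hstack (P * C) J) \<le> dim_row (hstack (P * C) J)" by (rule injm_le_rows)
    moreover have "hstack (P * C) J \<in> carrier_mat n ((n - k + 1) + k)"
      by (rule hstack_carrier[OF mult_carrier_mat[OF Pc C] J])
    ultimately show False using kn by simp
  qed
  have "P \<in> proj_grass (n - k) n" unfolding proj_grass_def using Pc PP hP r1 r2 kn by simp
  then show "(1\<^sub>m n - J * pinv J) \<in> proj_grass (n - k) n" unfolding P_def Q_def X_def .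
  show "(1\<^sub>m n - J * pinv J) * J = 0\<^sub>m n k" using PJ unfolding P_def Q_def X_def .
  show "pinv J * (1\<^sub>m n - J * pinv J) = 0\<^sub>m k n" using XP unfolding P_def Q_def X_def .
qed


lemma proj_unique:
  assumes J: "J \<in> carrier_mat n k" and iJ: "injm J" and kn: "k \<le> n"
    and P': "P' \<in> proj_grass (n - k) n" and P'J: "P' * J = 0\<^sub>m n k"
  shows "P' = 1\<^sub>m n - J * pinv J"
proof -
  define X where "X = pinv J"
  have X: "X \<in> carrier_mat k n" and XJ: "X * J = 1\<^sub>m k"
    using pinv_col[OF J iJ] unfolding X_def by auto
  define P where "P = 1\<^sub>m n - J * X"
  have Pg: "P \<in> proj_grass (n - k) n" and XP: "X * P = 0\<^sub>m k n"
    using phat_props[OF J iJ kn] unfolding P_def X_def by auto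
  have Pc: "P \<in> carrier_mat n n" and hP: "mat_adjoint P = P" using Pg unfolding proj_grass_def by auto
  have P'c: "P' \<in> carrier_mat n n" and P'P': "P' * P' = P'" and hP': "mat_adjoint P' = P'"
    using P' unfolding proj_grass_def by auto
  have P'P: "P' * P = P'"
  proof -
    have "P' * P = P' * 1\<^sub>m n - P' * (J * X)" unfolding P_def
      by (rule mult_minus_distrib_mat[OF P'c one_carrier_mat mult_carrier_mat[OF J X]])
    also have "P' * (J * X) = (P' * J) * X" by (rule assoc_mult_mat[symmetric, OF P'c J X])
    also have "(P' * J) * X = 0\<^sub>m n n" unfolding P'J using X by simp
    finally show ?thesis using minus_zero_right[OF P'c] P'c by simp
  qed
  define Z where "Z = P - P * P'"
  have Zc: "Z \<in> carrier_mat n n" unfolding Z_def by (rule minus_carrier_mat[OF mult_carrier_mat[OF Pc P'c]])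
  have Z0: "Z = 0\<^sub>m n n"
  proof (rule ccontr)
    assume "Z \<noteq> 0\<^sub>m n n"
    then obtain c where c: "c \<in> carrier_mat n 1" and iZc: "injm (Z * c)"
      using nonzero_inj_col[OF Zc] by blast
    have P'Z: "P' * Z = 0\<^sub>m n n"
    proof -
      have "P' * Z = P' * P - P' * (P * P')" unfolding Z_def
        by (rule mult_minus_distrib_mat[OF P'c Pc mult_carrier_mat[OF Pc P'c]])
      also have "P' * (P * P') = (P' * P) * P'" by (rule assoc_mult_mat[symmetric, OF P'c Pc P'c])
      finally show ?thesis using P'P P'P' minus_self_zero[OF P'c] by simp
    qed
    have XZ: "X * Z = 0\<^sub>m k n"
    proof -
      have "X * Z = X * P - X * (P * P')" unfolding Z_def
        by (rule mult_minus_distrib_mat[OF X Pc mult_carrier_mat[OF Pc P'c]])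
      also have "X * (P * P') = (X * P) * P'" by (rule assoc_mult_mat[symmetric, OF X Pc P'c])
      finally show ?thesis using XP P'c zero_minus_zero by simp
    qed
    have Zcc: "Z * c \<in> carrier_mat n 1" using Zc c by simp
    have "X * (Z * c) = 0\<^sub>m k 1" using assoc_mult_mat[symmetric, OF X Zc c] XZ c by simp
    moreover have "injm (X * J)" using XJ injm_one by simp
    ultimately have iA1: "injm (hstack (Z * c) J)"
      using injm_hstack[OF Zcc J X iZc] by blast
    have A1: "hstack (Z * c) J \<in> carrier_mat n (k + 1)"
      using hstack_carrier[OF Zcc J] by (simp add: add.commute)
    have "P' * hstack (Z * c) J = hstack (P' * (Z * c)) (P' * J)" by (rule mult_hstack[OF P'c Zcc J])
    also have "P' * (Z * c) = 0\<^sub>m n 1" using assoc_mult_mat[symmetric, OF P'c Zc c] P'Z c by simp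
    also have "hstack (0\<^sub>m n 1) (P' * J) = 0\<^sub>m n (k + 1)" unfolding P'J using hstack_zero[of n 1 k] by (simp add: add.commute)
    finally have "P' * hstack (Z * c) J = 0\<^sub>m n (k + 1)" .
    then show False using core_contra[OF P' A1 iA1 _ kn] by blast
  qed
  have PPP: "P = P * P'" using minus_eq_zero[OF Pc mult_carrier_mat[OF Pc P'c]] Z0 unfolding Z_def by blast
  have "P' = mat_adjoint (P' * P)" using P'P hP' by simp
  also have "\<dots> = mat_adjoint P * mat_adjoint P'" by (rule adj_mult[OF P'c Pc])
  also have "\<dots> = P * P'" using hP hP' by simp
  also have "\<dots> = P" using PPP by simp
  finally show ?thesis unfolding P_def X_def .
qed


lemma rank_XD:
  fixes W W_D S_D :: "complex mat"
  assumes U: "0 < U" and Dp: "0 < D" and S_D: "S_D \<in> qpsk_mats U D"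
    and W: "W \<in> carrier_mat I U" and W_D: "W_D \<in> carrier_mat I D"
    and ne: "\<And>S'. S' \<in> qpsk_mats U D \<Longrightarrow> S' \<noteq> S_D \<Longrightarrow> I < mrank (vstack (S_D - S') (W_D - W * S'))"
  shows "I \<le> mrank (vstack (0\<^sub>m U D) (W_D - W * S_D))"
proof -
  have Sc: "S_D \<in> carrier_mat U D" using S_D unfolding qpsk_mats_def by simp
  define s where "s = S_D $$ (0, 0)"
  have sq: "s \<in> qpsk" using S_D U Dp unfolding qpsk_mats_def s_def by auto
  have snz: "s \<noteq> 0" by (rule qpsk_nz[OF sq])
  define S2 :: "complex mat" where "S2 = mat U D (\<lambda>(i, j). if i = 0 \<and> j = 0 then - s else S_D $$ (i, j))"
  have S2c: "S2 \<in> carrier_mat U D" unfolding S2_def by simp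
  have S2q: "S2 \<in> qpsk_mats U D"
    unfolding qpsk_mats_def using S2c S_D qpsk_neg[OF sq] unfolding qpsk_mats_def S2_def by auto
  have "S2 $$ (0, 0) = - s" unfolding S2_def using U Dp by simp
  then have S2ne: "S2 \<noteq> S_D" using snz s_def by auto
  define Dl where "Dl = S_D - S2"
  have Dlc: "Dl \<in> carrier_mat U D" unfolding Dl_def by (rule minus_carrier_mat[OF S2c])
  have Dle: "\<And>i j. i < U \<Longrightarrow> j < D \<Longrightarrow> Dl $$ (i, j) = (if i = 0 \<and> j = 0 then 2 * s else 0)"
    unfolding Dl_def S2_def using Sc s_def by auto
  define XD where "XD = W_D - W * S_D"
  have XDc: "XD \<in> carrier_mat I D" unfolding XD_def by (rule minus_carrier_mat[OF mult_carrier_mat[OF W Sc]])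
  define R1 where "R1 = vstack Dl (W * Dl)"
  have WDl: "W * Dl \<in> carrier_mat I D" using W Dlc by simp
  have R1c: "R1 \<in> carrier_mat (U + I) D" unfolding R1_def by (rule vstack_carrier[OF Dlc WDl])
  define V0 where "V0 = vstack (0\<^sub>m U D) XD"
  have V0c: "V0 \<in> carrier_mat (U + I) D" unfolding V0_def by (rule vstack_carrier[OF zero_carrier_mat XDc])
  define V2 where "V2 = vstack (S_D - S2) (W_D - W * S2)"
  have WDlm: "W * Dl = W * S_D - W * S2" unfolding Dl_def by (rule mult_minus_distrib_mat[OF W Sc S2c])
  have V2eq: "V2 = R1 + V0"
  proof (rule eq_matI)
    fix i j assume ij: "i < dim_row (R1 + V0)" "j < dim_col (R1 + V0)"
    then have i: "i < U + I" and j: "j < D" using R1c V0c by auto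
    show "V2 $$ (i, j) = (R1 + V0) $$ (i, j)"
    proof (cases "i < U")
      case True
      then show ?thesis unfolding V2_def R1_def V0_def Dl_def using i j Sc S2c W_D W XDc
        by (simp add: vstack_def)
    next
      case False
      then have i': "i - U < I" using i by simp
      have "(R1 + V0) $$ (i, j) = (W * Dl) $$ (i - U, j) + XD $$ (i - U, j)"
        unfolding R1_def V0_def using False i j Dlc WDl XDc W by (simp add: vstack_def)
      also have "\<dots> = V2 $$ (i, j)"
        unfolding V2_def WDlm XD_def using False i' j Sc S2c W_D W by (simp add: vstack_def)
      finally show ?thesis by simp
    qed
  qed (use R1c V0c Sc W_D S2c W in \<open>simp_all add: V2_def vstack_def\<close>)
  have WDle: "\<And>i j. i < I \<Longrightarrow> j < D \<Longrightarrow> (W * Dl) $$ (i, j) = W $$ (i, 0) * (2 * s) * (if j = 0 then 1 else 0)"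
  proof -
    fix i j assume i: "i < I" and j: "j < D"
    have "(W * Dl) $$ (i, j) = (\<Sum>l\<in>{0..<U}. W $$ (i, l) * Dl $$ (l, j))"
      using i j W Dlc by (simp add: scalar_prod_def)
    also have "\<dots> = (\<Sum>l\<in>{0..<U}. if l = 0 then W $$ (i, 0) * (2 * s) * (if j = 0 then 1 else 0) else 0)"
      by (rule sum.cong) (use Dle j in auto)
    also have "\<dots> = W $$ (i, 0) * (2 * s) * (if j = 0 then 1 else 0)" using U by simp
    finally show "(W * Dl) $$ (i, j) = W $$ (i, 0) * (2 * s) * (if j = 0 then 1 else 0)" .
  qed
  have rR1: "mrank R1 \<le> 1"
  proof (rule mrank_le1[OF R1c])
    fix r c assume r: "r < U + I" and c: "c < D"
    show "R1 $$ (r, c) = (if r < U then (if r = 0 then 2 * s else 0) else W $$ (r - U, 0) * (2 * s))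
        * (if c = 0 then 1 else 0)"
    proof (cases "r < U")
      case True
      then show ?thesis unfolding R1_def using c Dlc WDl Dle W by (simp add: vstack_def)
    next
      case False
      then show ?thesis unfolding R1_def using r c Dlc WDl WDle W by (simp add: vstack_def)
    qed
  qed
  have "I < mrank V2" unfolding V2_def by (rule ne[OF S2q S2ne])
  also have "mrank V2 \<le> mrank R1 + mrank V0" unfolding V2eq by (rule mrank_subadd[OF R1c V0c])
  finally show ?thesis using rR1 unfolding V0_def XD_def by simp
qed


lemma four_mat: fixes A1 A2 A3 A4 :: "complex mat"
  assumes "A1 \<in> carrier_mat n m" "A2 \<in> carrier_mat n m" "A3 \<in> carrier_mat n m" "A4 \<in> carrier_mat n m"
  shows "(A1 + A2) - (A3 + A4) = (A1 - A3) + (A2 - A4)"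
  by (rule eq_matI) (use assms in auto)

lemma decomp:
  fixes H J S_T S_D W_T W_D S' X :: "complex mat"
  assumes H: "H \<in> carrier_mat B U" and J: "J \<in> carrier_mat B I" and S_T: "S_T \<in> carrier_mat U T"
    and X: "X \<in> carrier_mat T U" and SX: "S_T * X = 1\<^sub>m U" and S_D: "S_D \<in> carrier_mat U D"
    and S': "S' \<in> carrier_mat U D" and W_T: "W_T \<in> carrier_mat I T" and W_D: "W_D \<in> carrier_mat I D"
  shows "(H * S_D + J * W_D) - ((H * S_T + J * W_T) * X) * S' =
       hstack H J * vstack (S_D - S') (W_D - W_T * X * S')"
proof -
  define W where "W = W_T * X"
  have Wc: "W \<in> carrier_mat I U" unfolding W_def using W_T X by simp
  have h1: "(H * S_T + J * W_T) * X = H + J * W"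
  proof -
    have "(H * S_T + J * W_T) * X = H * S_T * X + J * W_T * X"
      by (rule add_mult_distrib_mat[OF mult_carrier_mat[OF H S_T] mult_carrier_mat[OF J W_T] X])
    also have "H * S_T * X = H * (S_T * X)" by (rule assoc_mult_mat[OF H S_T X])
    also have "J * W_T * X = J * W" unfolding W_def by (rule assoc_mult_mat[OF J W_T X])
    finally show ?thesis using SX H by simp
  qed
  have h2: "(H + J * W) * S' = H * S' + J * (W * S')"
  proof -
    have "(H + J * W) * S' = H * S' + J * W * S'"
      by (rule add_mult_distrib_mat[OF H mult_carrier_mat[OF J Wc] S'])
    also have "J * W * S' = J * (W * S')" by (rule assoc_mult_mat[OF J Wc S'])
    finally show ?thesis .
  qed
  have h3: "hstack H J * vstack (S_D - S') (W_D - W * S') = H * (S_D - S') + J * (W_D - W * S')"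
    by (rule hstack_mult_vstack[OF H J minus_carrier_mat[OF S'] minus_carrier_mat[OF mult_carrier_mat[OF Wc S']]])
  have h4: "H * (S_D - S') = H * S_D - H * S'" by (rule mult_minus_distrib_mat[OF H S_D S'])
  have h5: "J * (W_D - W * S') = J * W_D - J * (W * S')"
    by (rule mult_minus_distrib_mat[OF J W_D mult_carrier_mat[OF Wc S']])
  have "(H * S_D + J * W_D) - ((H * S_T + J * W_T) * X) * S' = (H * S_D + J * W_D) - (H * S' + J * (W * S'))"
    unfolding h1 h2 ..
  also have "\<dots> = (H * S_D - H * S') + (J * W_D - J * (W * S'))"
    by (rule four_mat[OF mult_carrier_mat[OF H S_D] mult_carrier_mat[OF J W_D] mult_carrier_mat[OF H S'] mult_carrier_mat[OF J mult_carrier_mat[OF Wc S']]])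
  also have "\<dots> = hstack H J * vstack (S_D - S') (W_D - W * S')" unfolding h3 h4 h5 ..
  finally show "(H * S_D + J * W_D) - ((H * S_T + J * W_T) * X) * S' =
       hstack H J * vstack (S_D - S') (W_D - W_T * X * S')" unfolding W_def .
qed


theorem theorem3:
  fixes B U I T D :: nat
    and H J S_T S_D W_T W_D Y_T Y_D :: "complex mat"
  assumes pos: "0 < B" "0 < U" "0 < I" "0 < T" "0 < D"
    and dims: "U + I \<le> B" "U \<le> T"
    and H: "H \<in> carrier_mat B U" and J: "J \<in> carrier_mat B I"
    and HJ_rank: "mrank (hstack H J) = U + I"
    and S_T: "S_T \<in> carrier_mat U T" and S_T_rank: "mrank S_T = U"
    and S_D: "S_D \<in> qpsk_mats U D"
    and W_T: "W_T \<in> carrier_mat I T" and W_D: "W_D \<in> carrier_mat I D"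
    and Y_T: "Y_T = H * S_T + J * W_T"
    and Y_D: "Y_D = H * S_D + J * W_D"
    and not_ecl: "\<not> eclipsed_ce U I D S_T S_D W_T W_D"
  shows "(1\<^sub>m B - J * pinv J) \<in> proj_grass (B - I) B \<and>
         (\<forall>S' \<in> qpsk_mats U D. \<forall>P' \<in> proj_grass (B - I) B.
            (S', P') \<noteq> (S_D, 1\<^sub>m B - J * pinv J) \<longrightarrow>
            frob_sq ((1\<^sub>m B - J * pinv J) * (Y_D - (Y_T * pinv S_T) * S_D))
              < frob_sq (P' * (Y_D - (Y_T * pinv S_T) * S')))"
  proof -
  have Hc: "H \<in> carrier_mat B U" by (rule H)
  have Jc: "J \<in> carrier_mat B I" by (rule J)
  have S_Dc: "S_D \<in> carrier_mat U D" using S_D unfolding qpsk_mats_def by simp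
  have IB: "I \<le> B" using dims by simp
  define K where "K = hstack H J"
  have Kc: "K \<in> carrier_mat B (U + I)" unfolding K_def by (rule hstack_carrier[OF H J])
  have iK: "injm K"
    by (rule rank_full_col_injm) (use HJ_rank Kc in \<open>simp add: K_def\<close>)
  have iJ: "injm J"
  proof (rule injmI[OF J])
    fix Z assume Z: "Z \<in> carrier_mat I 1" and h: "J * Z = 0\<^sub>m B 1"
    have VZ: "vstack (0\<^sub>m U 1) Z \<in> carrier_mat (U + I) 1" by (rule vstack_carrier[OF zero_carrier_mat Z])
    have "K * vstack (0\<^sub>m U 1) Z = H * 0\<^sub>m U 1 + J * Z"
      unfolding K_def by (rule hstack_mult_vstack[OF H J zero_carrier_mat Z])
    also have "\<dots> = 0\<^sub>m B 1" using h H by simp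
    finally have "vstack (0\<^sub>m U 1) Z = 0\<^sub>m (U + I) 1" by (rule injm_cancel[OF Kc iK VZ])
    then show "Z = 0\<^sub>m I 1" by (rule vstack_zero_bot[OF zero_carrier_mat Z])
  qed
  define XT where "XT = pinv S_T"
  have XT: "XT \<in> carrier_mat T U" and SXT: "S_T * XT = 1\<^sub>m U"
    using pinv_row[OF S_T S_T_rank] unfolding XT_def by auto
  define W where "W = W_T * XT"
  have Wc: "W \<in> carrier_mat I U" unfolding W_def using W_T XT by simp
  have dec: "\<And>S'. S' \<in> carrier_mat U D \<Longrightarrow> Y_D - (Y_T * pinv S_T) * S' = K * vstack (S_D - S') (W_D - W * S')"
    unfolding Y_D Y_T K_def W_def XT_def[symmetric]
    by (rule decomp[OF H J S_T XT SXT S_Dc _ W_T W_D])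
  define Ph where "Ph = 1\<^sub>m B - J * pinv J"
  have Phg: "Ph \<in> proj_grass (B - I) B" and PhJ: "Ph * J = 0\<^sub>m B I"
    using phat_props[OF J iJ IB] unfolding Ph_def by auto
  have Phc: "Ph \<in> carrier_mat B B" using Phg unfolding proj_grass_def by simp
  define XD where "XD = W_D - W * S_D"
  have XDc: "XD \<in> carrier_mat I D" unfolding XD_def by (rule minus_carrier_mat[OF mult_carrier_mat[OF Wc S_Dc]])
  define V0 where "V0 = vstack (0\<^sub>m U D) XD"
  have V0c: "V0 \<in> carrier_mat (U + I) D" unfolding V0_def by (rule vstack_carrier[OF zero_carrier_mat XDc])
  have SS0: "S_D - S_D = 0\<^sub>m U D" by (rule minus_self_zero[OF S_Dc])
  have KV0: "K * V0 = J * XD"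
  proof -
    have "K * V0 = H * 0\<^sub>m U D + J * XD"
      unfolding K_def V0_def by (rule hstack_mult_vstack[OF H J zero_carrier_mat XDc])
    also have "\<dots> = J * XD" using H J XDc by simp
    finally show ?thesis .
  qed
  have dec0: "Y_D - (Y_T * pinv S_T) * S_D = J * XD"
    using dec[OF S_Dc] SS0 KV0 unfolding V0_def XD_def by simp
  have opt0: "Ph * (Y_D - (Y_T * pinv S_T) * S_D) = 0\<^sub>m B D"
  proof -
    have "Ph * (J * XD) = (Ph * J) * XD" by (rule assoc_mult_mat[symmetric, OF Phc J XDc])
    then show ?thesis unfolding dec0 PhJ using XDc by simp
  qed
  have ne: "\<And>S'. S' \<in> qpsk_mats U D \<Longrightarrow> S' \<noteq> S_D \<Longrightarrow> I < mrank (vstack (S_D - S') (W_D - W * S'))"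
    using not_ecl unfolding eclipsed_ce_def W_def XT_def by force
  have rXD: "I \<le> mrank V0" unfolding V0_def XD_def
    by (rule rank_XD[OF pos(2) pos(5) S_D Wc W_D ne])
  have main: "\<And>S' P'. S' \<in> qpsk_mats U D \<Longrightarrow> P' \<in> proj_grass (B - I) B \<Longrightarrow> (S', P') \<noteq> (S_D, Ph) \<Longrightarrow>
      P' * (Y_D - (Y_T * pinv S_T) * S') \<noteq> 0\<^sub>m B D"
  proof
    fix S' P' assume S'q: "S' \<in> qpsk_mats U D" and P'g: "P' \<in> proj_grass (B - I) B"
      and neq: "(S', P') \<noteq> (S_D, Ph)" and z: "P' * (Y_D - (Y_T * pinv S_T) * S') = 0\<^sub>m B D"
    have S'c: "S' \<in> carrier_mat U D" using S'q unfolding qpsk_mats_def by simp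
    have P'c: "P' \<in> carrier_mat B B" using P'g unfolding proj_grass_def by simp
    define V' where "V' = vstack (S_D - S') (W_D - W * S')"
    have V'c: "V' \<in> carrier_mat (U + I) D" unfolding V'_def
      by (rule vstack_carrier[OF minus_carrier_mat[OF S'c] minus_carrier_mat[OF mult_carrier_mat[OF Wc S'c]]])
    have zK: "P' * (K * V') = 0\<^sub>m B D" using z dec[OF S'c] unfolding V'_def by simp
    show False
    proof (cases "S' = S_D")
      case False
      have "I < mrank V'" unfolding V'_def by (rule ne[OF S'q False])
      then obtain C where C: "C \<in> carrier_mat D (I + 1)" and iVC: "injm (V' * C)"
        using rank_witness[of "I + 1" V'] V'c by auto
      have VC: "V' * C \<in> carrier_mat (U + I) (I + 1)" using V'c C by simp
      have iA: "injm (K * (V' * C))" by (rule injm_mult[OF Kc VC iK iVC])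
      have A: "K * (V' * C) \<in> carrier_mat B (I + 1)" using Kc VC by simp
      have "P' * (K * (V' * C)) = P' * ((K * V') * C)" using assoc_mult_mat[symmetric, OF Kc V'c C] by simp
      also have "\<dots> = (P' * (K * V')) * C" by (rule assoc_mult_mat[symmetric, OF P'c mult_carrier_mat[OF Kc V'c] C])
      also have "\<dots> = 0\<^sub>m B (I + 1)" unfolding zK using C by simp
      finally show False using core_contra[OF P'g A iA _ IB] by blast
    next
      case True
      then have P'ne: "P' \<noteq> Ph" using neq by simp
      have V'0: "V' = V0" unfolding V'_def V0_def XD_def True SS0 ..
      have zJ: "P' * (J * XD) = 0\<^sub>m B D" using zK V'0 KV0 by simp
      obtain C where C: "C \<in> carrier_mat D I" and iVC: "injm (V0 * C)"
        using rank_witness[of I V0] V0c rXD by auto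
      have XC: "XD * C \<in> carrier_mat I I" using XDc C by simp
      have V0C: "V0 * C = vstack (0\<^sub>m U I) (XD * C)"
        unfolding V0_def using vstack_mult[OF zero_carrier_mat XDc C] C by simp
      have iXC: "injm (XD * C)"
      proof (rule injmI[OF XC])
        fix Z assume Z: "Z \<in> carrier_mat I 1" and h: "XD * C * Z = 0\<^sub>m I 1"
        have "V0 * C * Z = vstack (0\<^sub>m U I * Z) (XD * C * Z)"
          unfolding V0C by (rule vstack_mult[OF zero_carrier_mat XC Z])
        also have "\<dots> = 0\<^sub>m (U + I) 1" using h Z vstack_zero[of U 1 I] by simp
        finally show "Z = 0\<^sub>m I 1" by (rule injm_cancel[OF mult_carrier_mat[OF V0c C] iVC Z])
      qed
      obtain E where E: "E \<in> carrier_mat I I" "XD * C * E = 1\<^sub>m I"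
        using injm_inv[OF XC iXC] by blast
      have P'J: "P' * J = 0\<^sub>m B I"
      proof -
        have P'Jc: "P' * J \<in> carrier_mat B I" using P'c J by simp
        have "P' * J = (P' * J) * (XD * C * E)" using E(2) right_mult_one_mat[OF P'Jc] by simp
        also have "\<dots> = (P' * J) * (XD * (C * E))" using assoc_mult_mat[OF XDc C E(1)] by simp
        also have "\<dots> = ((P' * J) * XD) * (C * E)"
          by (rule assoc_mult_mat[symmetric, OF P'Jc XDc mult_carrier_mat[OF C E(1)]])
        also have "(P' * J) * XD = P' * (J * XD)" by (rule assoc_mult_mat[OF P'c J XDc])
        also have "\<dots> = 0\<^sub>m B D" by (rule zJ)
        also have "0\<^sub>m B D * (C * E) = 0\<^sub>m B I" using C E(1) by simp
        finally show ?thesis .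
      qed
      have "P' = Ph" unfolding Ph_def by (rule proj_unique[OF J iJ IB P'g P'J])
      then show False using P'ne by simp
    qed
  qed
  show ?thesis
  proof (intro conjI ballI impI)
    show "1\<^sub>m B - J * pinv J \<in> proj_grass (B - I) B" using Phg unfolding Ph_def .
  next
    fix S' P' assume S'q: "S' \<in> qpsk_mats U D" and P'g: "P' \<in> proj_grass (B - I) B"
      and neq: "(S', P') \<noteq> (S_D, 1\<^sub>m B - J * pinv J)"
    have S'c: "S' \<in> carrier_mat U D" using S'q unfolding qpsk_mats_def by simp
    have P'c: "P' \<in> carrier_mat B B" using P'g unfolding proj_grass_def by simp
    have nz: "P' * (Y_D - (Y_T * pinv S_T) * S') \<noteq> 0\<^sub>m B D"
      using main[OF S'q P'g] neq unfolding Ph_def by blast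
    have V'c: "vstack (S_D - S') (W_D - W * S') \<in> carrier_mat (U + I) D"
      by (rule vstack_carrier[OF minus_carrier_mat[OF S'c] minus_carrier_mat[OF mult_carrier_mat[OF Wc S'c]]])
    have Mc: "P' * (Y_D - (Y_T * pinv S_T) * S') \<in> carrier_mat B D"
      unfolding dec[OF S'c] using P'c Kc V'c by simp
    have "frob_sq (P' * (Y_D - (Y_T * pinv S_T) * S')) \<noteq> 0"
      using frob_zero[OF Mc] nz by blast
    moreover have "frob_sq (P' * (Y_D - (Y_T * pinv S_T) * S')) \<ge> 0" by (rule frob_nonneg)
    moreover have "frob_sq ((1\<^sub>m B - J * pinv J) * (Y_D - (Y_T * pinv S_T) * S_D)) = 0"
      using opt0 frob_zero_mat unfolding Ph_def by simp
    ultimately show "frob_sq ((1\<^sub>m B - J * pinv J) * (Y_D - (Y_T * pinv S_T) * S_D))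
              < frob_sq (P' * (Y_D - (Y_T * pinv S_T) * S'))" by simp
  qed
qed

end
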